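(* For $k\in\mathbb Z_{>0}$, $0\le l\le k$ and $N\ge1$, the number $p(k,l,N)$ of $ehf$-monomials of length $N$ equals $d^{(N)}_{k,l}(0)$.
   Context: An ordered monomial is a formal product $f_{n-1}^{a_{n-1}}h_{n-1}^{b_{n-1}}e_{n-1}^{c_{n-1}}\cdots e_2^{c_2}f_1^{a_1}h_1^{b_1}e_1^{c_1}f_0^{a_0}$ determined by its nonnegative integer exponents (set $a_i=b_i=c_i=0$ for $i\ge n$); it is an $ehf$-monomial (for given $k,l$) if (i) $a_i+a_{i+1}+b_{i+1}\le k$ for $i\ge0$; (ii) $a_i+b_{i+1}+c_{i+1}\le k$ for $i\ge0$; (iii) $a_i+b_i+c_{i+1}\le k$ for $i>0$; (iv) $b_i+c_i+c_{i+1}\le k$ for $i>0$; (v) $a_0\le l$, $c_1\le k-l$; it has length $N$ if $a_i=b_i=c_i=0$ for $i\ge N$. The level $k$ Verlinde algebra has basis $\pi_0,\dots,\pi_k$ with $\pi_l\pi_{l'}=\sum_i\pi_i$, sum over $|l-l'|\le i\le\min(2k-l-l',l+l')$, $i+l-l'$ even; $d^{(N)}_{k,l}(0)$ is defined by $(\pi_0+2\pi_1+\cdots+(k+1)\pi_k)^N=\sum_ld^{(N)}_{k,l}(0)\pi_l$. *)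

theory Defs
  imports Main
begin

text \<open>A monomial is given by exponent
  sequences a, b, c :: nat \<Rightarrow> nat (a_i for i \<ge> 0, b_i and c_i for i \<ge> 1;
  b_0 and c_0 do not occur and are fixed to 0).\<close>

definition is_ehf_monomial :: "nat \<Rightarrow> nat \<Rightarrow> (nat \<Rightarrow> nat) \<Rightarrow> (nat \<Rightarrow> nat) \<Rightarrow> (nat \<Rightarrow> nat) \<Rightarrow> bool" where
  "is_ehf_monomial k l a b c \<longleftrightarrow>
     b 0 = 0 \<and> c 0 = 0 \<and>
     (\<forall>i. a i + a (i+1) + b (i+1) \<le> k) \<and>
     (\<forall>i. a i + b (i+1) + c (i+1) \<le> k) \<and>
     (\<forall>i>0. a i + b i + c (i+1) \<le> k) \<and>
     (\<forall>i>0. b i + c i + c (i+1) \<le> k) \<and>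
     a 0 \<le> l \<and> c 1 \<le> k - l"

definition ehf_monomials :: "nat \<Rightarrow> nat \<Rightarrow> nat \<Rightarrow> ((nat \<Rightarrow> nat) \<times> (nat \<Rightarrow> nat) \<times> (nat \<Rightarrow> nat)) set" where
  "ehf_monomials k l N = {(a, b, c). is_ehf_monomial k l a b c \<and>
       (\<forall>i\<ge>N. a i = 0 \<and> b i = 0 \<and> c i = 0)}"

definition p_count :: "nat \<Rightarrow> nat \<Rightarrow> nat \<Rightarrow> nat" where
  "p_count k l N = card (ehf_monomials k l N)"

text \<open>Level k Verlinde algebra: elements are coefficient vectors v :: nat \<Rightarrow> int,
  v i being the coefficient of \<pi>_i (only i \<le> k matter).\<close>

definition verlinde_coeff :: "nat \<Rightarrow> nat \<Rightarrow> nat \<Rightarrow> nat \<Rightarrow> int" where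
  "verlinde_coeff k l l' i =
     (if \<bar>int l - int l'\<bar> \<le> int i \<and> int i \<le> min (2 * int k - int l - int l') (int l + int l')
         \<and> even (int i + int l - int l') then 1 else 0)"

definition verlinde_mult :: "nat \<Rightarrow> (nat \<Rightarrow> int) \<Rightarrow> (nat \<Rightarrow> int) \<Rightarrow> (nat \<Rightarrow> int)" where
  "verlinde_mult k x y = (\<lambda>i. if i \<le> k then
      (\<Sum>l\<le>k. \<Sum>l'\<le>k. x l * y l' * verlinde_coeff k l l' i) else 0)"

definition verlinde_basis :: "nat \<Rightarrow> nat \<Rightarrow> (nat \<Rightarrow> int)" where
  "verlinde_basis k j = (\<lambda>i. if i = j then 1 else 0)"

primrec verlinde_pow :: "nat \<Rightarrow> (nat \<Rightarrow> int) \<Rightarrow> nat \<Rightarrow> (nat \<Rightarrow> int)" where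
  "verlinde_pow k x 0 = verlinde_basis k 0"
| "verlinde_pow k x (Suc n) = verlinde_mult k (verlinde_pow k x n) x"

definition verlinde_X :: "nat \<Rightarrow> (nat \<Rightarrow> int)" where
  "verlinde_X k = (\<lambda>i. if i \<le> k then int i + 1 else 0)"

definition d_coeff :: "nat \<Rightarrow> nat \<Rightarrow> nat \<Rightarrow> int" where
  "d_coeff N k l = verlinde_pow k (verlinde_X k) N l"

end

theory Submission
  imports Defs
begin


lemma card_interval_b:
  fixes x y x' y' k :: nat
  shows "card {\<beta>. \<beta> \<le> k \<and> x+x'+\<beta> \<le> k \<and> x+\<beta>+y \<le> k \<and> x'+\<beta>+y' \<le> k \<and> \<beta>+y+y' \<le> k}
       = card {m. m \<le> k \<and> x' \<le> m \<and> y \<le> m \<and> x + m \<le> k \<and> y' + m \<le> k}"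
proof (cases "max x y' + max x' y \<le> k")
  case True
  have 1: "{\<beta>. \<beta> \<le> k \<and> x+x'+\<beta> \<le> k \<and> x+\<beta>+y \<le> k \<and> x'+\<beta>+y' \<le> k \<and> \<beta>+y+y' \<le> k}
     = {..k - (max x y' + max x' y)}" using True by (auto simp: max_def split: if_splits)
  have 2: "{m. m \<le> k \<and> x' \<le> m \<and> y \<le> m \<and> x + m \<le> k \<and> y' + m \<le> k} = {max x' y..k - max x y'}"
    using True by (auto simp: max_def split: if_splits)
  show ?thesis unfolding 1 2 using True by simp
next
  case False
  have 1: "{\<beta>. \<beta> \<le> k \<and> x+x'+\<beta> \<le> k \<and> x+\<beta>+y \<le> k \<and> x'+\<beta>+y' \<le> k \<and> \<beta>+y+y' \<le> k} = {}"
    using False by (auto simp: max_def split: if_splits)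
  have 2: "{m. m \<le> k \<and> x' \<le> m \<and> y \<le> m \<and> x + m \<le> k \<and> y' + m \<le> k} = {}"
    using False by (auto simp: max_def split: if_splits)
  show ?thesis unfolding 1 2 by simp
qed

definition Bset :: "nat \<Rightarrow> nat \<Rightarrow> nat \<Rightarrow> nat \<Rightarrow> (nat \<times> nat \<times> nat) set" where
  "Bset k l x' y' = {(x,y,\<beta>). x \<le> l \<and> y \<le> k-l \<and> x+x'+\<beta> \<le> k \<and> x+\<beta>+y \<le> k \<and> x'+\<beta>+y' \<le> k \<and> \<beta>+y+y' \<le> k}"

definition Mn :: "nat \<Rightarrow> nat \<Rightarrow> nat \<Rightarrow> nat" where
  "Mn k l m = (min (k-l) m + 1) * (min l (k-m) + 1)"

lemma card_of_bool: "card {m. m \<le> (k::nat) \<and> Q m} = (\<Sum>m\<le>k. (of_bool (Q m)::nat))"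
proof -
  have "(\<Sum>m\<le>k. (of_bool (Q m)::nat)) = card ({..k} \<inter> {m. Q m})" by simp
  moreover have "{..k} \<inter> {m. Q m} = {m. m \<le> k \<and> Q m}" by auto
  ultimately show ?thesis by simp
qed

lemma sum_le_bound: "m \<le> k \<Longrightarrow> (\<Sum>x\<le>(l::nat). of_bool (x + m \<le> k)) = min l (k-m) + (1::nat)"
proof -
  assume m: "m \<le> k"
  have "(\<Sum>x\<le>l. of_bool (x + m \<le> k)) = card ({..l} \<inter> {x. x + m \<le> k})" by simp
  moreover have "{..l} \<inter> {x. x + m \<le> k} = {..min l (k-m)}" using m by auto
  ultimately show ?thesis by simp
qed

lemma sum_le_bound2: "(\<Sum>y\<le>(j::nat). of_bool (y \<le> m)) = min j m + (1::nat)"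
proof -
  have "(\<Sum>y\<le>j. of_bool (y \<le> m)) = card ({..j} \<inter> {y. y \<le> m})" by simp
  moreover have "{..j} \<inter> {y. y \<le> m} = {..min j m}" by auto
  ultimately show ?thesis by simp
qed

lemma key_count:
  assumes "l \<le> k"
  shows "card (Bset k l x' y') = (\<Sum>m\<le>k. of_bool (x' \<le> m \<and> y' + m \<le> k) * Mn k l m)"
proof -
  have "Bset k l x' y' = (SIGMA x:{..l}. SIGMA y:{..k-l}.
      {\<beta>. \<beta> \<le> k \<and> x+x'+\<beta> \<le> k \<and> x+\<beta>+y \<le> k \<and> x'+\<beta>+y' \<le> k \<and> \<beta>+y+y' \<le> k})"
    unfolding Bset_def by auto
  then have "card (Bset k l x' y') = (\<Sum>x\<le>l. \<Sum>y\<le>k-l.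
      card {\<beta>. \<beta> \<le> k \<and> x+x'+\<beta> \<le> k \<and> x+\<beta>+y \<le> k \<and> x'+\<beta>+y' \<le> k \<and> \<beta>+y+y' \<le> k})"
    by (simp add: card_SigmaI)
  also have "\<dots> = (\<Sum>x\<le>l. \<Sum>y\<le>k-l. \<Sum>m\<le>k. of_bool (x' \<le> m \<and> y \<le> m \<and> x + m \<le> k \<and> y' + m \<le> k))"
    by (simp only: card_interval_b card_of_bool)
  also have "\<dots> = (\<Sum>x\<le>l. \<Sum>m\<le>k. \<Sum>y\<le>k-l. (of_bool (x' \<le> m \<and> y \<le> m \<and> x + m \<le> k \<and> y' + m \<le> k)::nat))"
    by (rule sum.cong[OF refl], rule sum.swap)
  also have "\<dots> = (\<Sum>m\<le>k. \<Sum>x\<le>l. \<Sum>y\<le>k-l. (of_bool (x' \<le> m \<and> y \<le> m \<and> x + m \<le> k \<and> y' + m \<le> k)::nat))"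
    by (rule sum.swap)
  also have "\<dots> = (\<Sum>m\<le>k. of_bool (x' \<le> m \<and> y' + m \<le> k) * ((\<Sum>x\<le>l. of_bool (x + m \<le> k)) * (\<Sum>y\<le>k-l. of_bool (y \<le> m))))"
    proof (intro sum.cong refl)
    fix m
    let ?c = "(of_bool (x' \<le> m \<and> y' + m \<le> k)::nat)"
    have "?c * ((\<Sum>x\<le>l. of_bool (x + m \<le> k)) * (\<Sum>y\<le>k-l. of_bool (y \<le> m)))
        = ?c * (\<Sum>x\<le>l. \<Sum>y\<le>k-l. of_bool (x + m \<le> k) * of_bool (y \<le> m))"
      by (simp only: sum_product)
    also have "\<dots> = (\<Sum>x\<le>l. \<Sum>y\<le>k-l. ?c * (of_bool (x + m \<le> k) * of_bool (y \<le> m)))"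
      by (simp only: sum_distrib_left)
    also have "\<dots> = (\<Sum>x\<le>l. \<Sum>y\<le>k-l. (of_bool (x' \<le> m \<and> y \<le> m \<and> x + m \<le> k \<and> y' + m \<le> k)::nat))"
      by (intro sum.cong refl) auto
    finally show "(\<Sum>x\<le>l. \<Sum>y\<le>k-l. (of_bool (x' \<le> m \<and> y \<le> m \<and> x + m \<le> k \<and> y' + m \<le> k)::nat))
       = ?c * ((\<Sum>x\<le>l. of_bool (x + m \<le> k)) * (\<Sum>y\<le>k-l. of_bool (y \<le> m)))" by simp
  qed
  also have "\<dots> = (\<Sum>m\<le>k. of_bool (x' \<le> m \<and> y' + m \<le> k) * Mn k l m)"
    by (intro sum.cong refl) (simp only: atMost_iff sum_le_bound sum_le_bound2 Mn_def mult.commute)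
  finally show ?thesis .
qed

lemma coeff_iff:
  "verlinde_coeff k m j l = 1 \<longleftrightarrow> (m \<le> j + l \<and> j \<le> m + l \<and> l \<le> m + j \<and> l+m+j \<le> 2*k \<and> even (j+m+l))"
proof -
  have e: "even (int j + int m - int l) \<longleftrightarrow> even (j+m+l)"
  proof -
    have "int j + int m - int l = int (j+m+l) - 2 * int l" by simp
    then show ?thesis by (simp add: even_of_nat)
  qed
  show ?thesis unfolding verlinde_coeff_def e by auto
qed

lemma coeff_set:
  assumes "l \<le> k" "m \<le> k"
  shows "{..k} \<inter> {j. verlinde_coeff k m j l = 1} =
     (\<lambda>t. (if l \<le> m then m-l else l-m) + 2*t) ` {..min (min l m) (k - max l m)}"
proof (intro set_eqI iffI)
  fix j assume "j \<in> {..k} \<inter> {j. verlinde_coeff k m j l = 1}"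
  then have j: "j \<le> k" "m \<le> j + l" "j \<le> m + l" "l \<le> m + j" "l+m+j \<le> 2*k" "even (j+m+l)"
    by (auto simp: coeff_iff)
  obtain q where q: "j+m+l = 2*q" using j(6) by (metis evenE)
  show "j \<in> (\<lambda>t. (if l \<le> m then m-l else l-m) + 2*t) ` {..min (min l m) (k - max l m)}"
  proof (cases "l \<le> m")
    case True
    have "j = (m - l) + 2*(q-m)" "q - m \<le> min (min l m) (k - max l m)"
      using j q True assms by auto
    then show ?thesis using True by (intro image_eqI[where x="q-m"]) auto
  next
    case False
    have "j = (l - m) + 2*(q-l)" "q - l \<le> min (min l m) (k - max l m)"
      using j q False assms by auto
    then show ?thesis using False by (intro image_eqI[where x="q-l"]) auto
  qed
next
  fix j assume "j \<in> (\<lambda>t. (if l \<le> m then m-l else l-m) + 2*t) ` {..min (min l m) (k - max l m)}"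
  then obtain t where t: "t \<le> min (min l m) (k - max l m)" "j = (if l \<le> m then m-l else l-m) + 2*t" by auto
  show "j \<in> {..k} \<inter> {j. verlinde_coeff k m j l = 1}"
  proof (cases "l \<le> m")
    case True
    then have "j + m + l = 2*(m+t)" using t by auto
    then have "even (j+m+l)" by (metis dvd_triv_left)
    then show ?thesis using t True assms by (auto simp: coeff_iff)
  next
    case False
    then have "j + m + l = 2*(l+t)" using t by auto
    then have "even (j+m+l)" by (metis dvd_triv_left)
    then show ?thesis using t False assms by (auto simp: coeff_iff)
  qed
qed

lemma arith_sum: "(\<Sum>t\<le>n. int (lo + 2*t) + 1) = int ((n+1)*(lo+n+1))"
  by (induction n) (auto simp: algebra_simps)

lemma M_sum:
  assumes "l \<le> k" "m \<le> k"
  shows "(\<Sum>j\<le>k. (int j + 1) * verlinde_coeff k m j l) = int (Mn k l m)"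
proof -
  define lo where "lo = (if l \<le> m then m-l else l-m)"
  define n where "n = min (min l m) (k - max l m)"
  have c01: "verlinde_coeff k m j l = of_bool (verlinde_coeff k m j l = 1)" for j
    by (simp add: verlinde_coeff_def)
  have "(\<Sum>j\<le>k. (int j + 1) * verlinde_coeff k m j l)
      = (\<Sum>j\<le>k. (int j + 1) * of_bool (verlinde_coeff k m j l = 1))"
    by (subst c01) simp
  also have "\<dots> = (\<Sum>j\<in>{..k} \<inter> {j. verlinde_coeff k m j l = 1}. int j + 1)"
    by simp
  also have "\<dots> = (\<Sum>j\<in>(\<lambda>t. lo + 2*t) ` {..n}. int j + 1)"
    using coeff_set[OF assms] unfolding lo_def n_def by simp
  also have "\<dots> = (\<Sum>t\<le>n. int (lo + 2*t) + 1)"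
    by (subst sum.reindex) (auto simp: inj_on_def)
  also have "\<dots> = int ((n+1)*(lo+n+1))" by (rule arith_sum)
  also have "(n+1)*(lo+n+1) = Mn k l m"
  proof (cases "l \<le> m")
    case True
    then have "n = min l (k-m)" "lo + n = min (k-l) m" using assms unfolding lo_def n_def by auto
    then show ?thesis unfolding Mn_def by (simp add: mult.commute)
  next
    case False
    then have "n = min (k-l) m" "lo + n = min l (k-m)" using assms unfolding lo_def n_def by auto
    then show ?thesis unfolding Mn_def by simp
  qed
  finally show ?thesis .
qed

type_synonym tr = "(nat \<Rightarrow> nat) \<times> (nat \<Rightarrow> nat) \<times> (nat \<Rightarrow> nat)"

definition Tset :: "nat \<Rightarrow> nat \<Rightarrow> tr set" where
  "Tset k N = {(a,b,c). b 0 = 0 \<and> c 0 = 0 \<and>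
     (\<forall>i. a i + a (i+1) + b (i+1) \<le> k) \<and>
     (\<forall>i. a i + b (i+1) + c (i+1) \<le> k) \<and>
     (\<forall>i>0. a i + b i + c (i+1) \<le> k) \<and>
     (\<forall>i>0. b i + c i + c (i+1) \<le> k) \<and>
     (\<forall>i\<ge>N. a i = 0 \<and> b i = 0 \<and> c i = 0)}"

lemma ehf_eq: "ehf_monomials k l N = {t \<in> Tset k N. fst t 0 \<le> l \<and> snd (snd t) 1 \<le> k - l}"
  by (auto simp: ehf_monomials_def Tset_def is_ehf_monomial_def)

definition Fset :: "nat \<Rightarrow> nat \<Rightarrow> (nat \<Rightarrow> nat) set" where
  "Fset k N = {f. (\<forall>i. f i \<le> k) \<and> (\<forall>i\<ge>N. f i = 0)}"

lemma finite_Fset: "finite (Fset k N)"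
proof -
  have inj: "inj_on (\<lambda>f. map f [0..<N]) (Fset k N)"
  proof (rule inj_onI)
    fix f g assume f: "f \<in> Fset k N" and g: "g \<in> Fset k N" and e: "map f [0..<N] = map g [0..<N]"
    show "f = g"
    proof
      fix i show "f i = g i"
      proof (cases "i < N")
        case True
        then show ?thesis using e by (metis map_eq_conv atLeastLessThan_iff set_upt zero_le)
      next
        case False
        then show ?thesis using f g by (auto simp: Fset_def)
      qed
    qed
  qed
  have sub: "(\<lambda>f. map f [0..<N]) ` Fset k N \<subseteq> {xs. set xs \<subseteq> {..k} \<and> length xs = N}"
    by (auto simp: Fset_def)
  have "finite {xs. set xs \<subseteq> {..k} \<and> length xs = N}"
    by (rule finite_lists_length_eq) simp
  then show ?thesis using inj sub by (metis finite_imageD finite_subset)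
qed

lemma Tset_sub: "Tset k N \<subseteq> Fset k N \<times> Fset k N \<times> Fset k N"
proof
  fix t assume t: "t \<in> Tset k N"
  obtain a b c where abc: "t = (a,b,c)" by (cases t) auto
  have h1: "\<forall>i. a i + a (i+1) + b (i+1) \<le> k" and h2: "\<forall>i. a i + b (i+1) + c (i+1) \<le> k"
    and b0: "b 0 = 0" and c0: "c 0 = 0" and v: "\<forall>i\<ge>N. a i = 0 \<and> b i = 0 \<and> c i = 0"
    using t abc by (auto simp: Tset_def)
  have "a i \<le> k" for i using h1 by (metis le_add1 le_trans)
  moreover have "b i \<le> k" for i
  proof (cases i)
    case 0 then show ?thesis using b0 by simp
  next
    case (Suc j) then show ?thesis using h1[rule_format, of j] by simp
  qed
  moreover have "c i \<le> k" for i
  proof (cases i)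
    case 0 then show ?thesis using c0 by simp
  next
    case (Suc j) then show ?thesis using h2[rule_format, of j] by simp
  qed
  ultimately show "t \<in> Fset k N \<times> Fset k N \<times> Fset k N" using abc v by (auto simp: Fset_def)
qed

lemma finite_Tset: "finite (Tset k N)"
  using Tset_sub finite_Fset by (metis finite_SigmaI finite_subset)

lemma finite_Bset: "finite (Bset k l x y)"
proof -
  have "Bset k l x y \<subseteq> {..k} \<times> {..k} \<times> {..k}" by (auto simp: Bset_def)
  then show ?thesis by (rule finite_subset) auto
qed



definition glue :: "tr \<times> (nat \<times> nat \<times> nat) \<Rightarrow> tr" where
  "glue = (\<lambda>((a,b,c),(x,y,\<beta>)). ((\<lambda>i. if i=0 then x else a (i-1)),
      (\<lambda>i. if i=0 then 0 else if i=1 then \<beta> else b (i-1)),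
      (\<lambda>i. if i=0 then 0 else if i=1 then y else c (i-1))))"

definition splt :: "tr \<Rightarrow> tr \<times> (nat \<times> nat \<times> nat)" where
  "splt = (\<lambda>(a,b,c). ((\<lambda>i. a (Suc i), \<lambda>i. if i=0 then 0 else b (Suc i), \<lambda>i. if i=0 then 0 else c (Suc i)),
      (a 0, c 1, b 1)))"

lemma glue_in:
  assumes N: "N \<ge> 1" and t: "(a,b,c) \<in> Tset k N" and B: "(x,y,\<beta>) \<in> Bset k l (a 0) (c 1)"
  shows "glue ((a,b,c),(x,y,\<beta>)) \<in> ehf_monomials k l (Suc N)"
proof -
  have b0: "b 0 = 0" and c0: "c 0 = 0" and h1: "\<forall>i. a i + a (i+1) + b (i+1) \<le> k"
    and h2: "\<forall>i. a i + b (i+1) + c (i+1) \<le> k" and h3: "\<forall>i>0. a i + b i + c (i+1) \<le> k"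
    and h4: "\<forall>i>0. b i + c i + c (i+1) \<le> k" and v: "\<forall>i\<ge>N. a i = 0 \<and> b i = 0 \<and> c i = 0"
    using t by (auto simp: Tset_def)
  have B': "x \<le> l" "y \<le> k-l" "x + a 0 + \<beta> \<le> k" "x+\<beta>+y \<le> k" "a 0 + \<beta> + c 1 \<le> k" "\<beta>+y+c 1 \<le> k"
    using B by (auto simp: Bset_def)
  define A where "A = (\<lambda>i. if i=0 then x else a (i-1))"
  define BB where "BB = (\<lambda>i. if i=0 then 0 else if i=1 then \<beta> else b (i-1))"
  define C where "C = (\<lambda>i. if i=0 then 0 else if i=1 then y else c (i-1))"
  have g: "glue ((a,b,c),(x,y,\<beta>)) = (A, BB, C)" unfolding glue_def A_def BB_def C_def by simp
  have i1: "A i + A (i+1) + BB (i+1) \<le> k" for i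
  proof (cases i)
    case 0 then show ?thesis using B' by (simp add: A_def BB_def)
  next
    case (Suc j) then show ?thesis using h1[rule_format, of j] by (simp add: A_def BB_def)
  qed
  have i2: "A i + BB (i+1) + C (i+1) \<le> k" for i
  proof (cases i)
    case 0 then show ?thesis using B' by (simp add: A_def BB_def C_def)
  next
    case (Suc j) then show ?thesis using h2[rule_format, of j] by (simp add: A_def BB_def C_def)
  qed
  have i3: "A i + BB i + C (i+1) \<le> k" if "i > 0" for i
  proof (cases "i = 1")
    case True then show ?thesis using B' by (simp add: A_def BB_def C_def)
  next
    case False
    then obtain j where j: "i = Suc (Suc j)" using \<open>i > 0\<close> by (metis One_nat_def gr0_implies_Suc not0_implies_Suc)
    then show ?thesis using h3[rule_format, of "Suc j"] by (simp add: A_def BB_def C_def)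
  qed
  have i4: "BB i + C i + C (i+1) \<le> k" if "i > 0" for i
  proof (cases "i = 1")
    case True then show ?thesis using B' by (simp add: A_def BB_def C_def)
  next
    case False
    then obtain j where j: "i = Suc (Suc j)" using \<open>i > 0\<close> by (metis One_nat_def gr0_implies_Suc not0_implies_Suc)
    then show ?thesis using h4[rule_format, of "Suc j"] by (simp add: A_def BB_def C_def)
  qed
  have vv: "A i = 0 \<and> BB i = 0 \<and> C i = 0" if "i \<ge> Suc N" for i
    using v[rule_format, of "i-1"] that N by (simp add: A_def BB_def C_def)
  have "(A, BB, C) \<in> ehf_monomials k l (Suc N)"
    unfolding ehf_monomials_def is_ehf_monomial_def
    using i1 i2 i3 i4 vv B' by (simp add: A_def BB_def C_def)
  then show ?thesis using g by simp
qed

lemma splt_in: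
  assumes q: "(a,b,c) \<in> ehf_monomials k l (Suc N)"
  shows "splt (a,b,c) \<in> (SIGMA t:Tset k N. Bset k l (fst t 0) (snd (snd t) 1))"
proof -
  have b0: "b 0 = 0" and c0: "c 0 = 0" and h1: "\<forall>i. a i + a (i+1) + b (i+1) \<le> k"
    and h2: "\<forall>i. a i + b (i+1) + c (i+1) \<le> k" and h3: "\<forall>i>0. a i + b i + c (i+1) \<le> k"
    and h4: "\<forall>i>0. b i + c i + c (i+1) \<le> k" and v: "\<forall>i\<ge>Suc N. a i = 0 \<and> b i = 0 \<and> c i = 0"
    and a0: "a 0 \<le> l" and c1: "c 1 \<le> k - l"
    using q by (auto simp: ehf_monomials_def is_ehf_monomial_def)
  define A where "A = (\<lambda>i. a (Suc i))"
  define BB where "BB = (\<lambda>i. if i=0 then 0 else b (Suc i))"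
  define C where "C = (\<lambda>i. if i=0 then 0 else c (Suc i))"
  have s: "splt (a,b,c) = ((A,BB,C),(a 0, c 1, b 1))" unfolding splt_def A_def BB_def C_def by simp
  have i1: "A i + A (i+1) + BB (i+1) \<le> k" for i
    using h1[rule_format, of "Suc i"] by (simp add: A_def BB_def)
  have i2: "A i + BB (i+1) + C (i+1) \<le> k" for i
    using h2[rule_format, of "Suc i"] by (simp add: A_def BB_def C_def)
  have i3: "A i + BB i + C (i+1) \<le> k" if "i > 0" for i
    using h3[rule_format, of "Suc i"] that by (simp add: A_def BB_def C_def)
  have i4: "BB i + C i + C (i+1) \<le> k" if "i > 0" for i
    using h4[rule_format, of "Suc i"] that by (simp add: A_def BB_def C_def)
  have vv: "A i = 0 \<and> BB i = 0 \<and> C i = 0" if "i \<ge> N" for i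
    using v[rule_format, of "Suc i"] that by (simp add: A_def BB_def C_def)
  have T: "(A,BB,C) \<in> Tset k N"
    unfolding Tset_def using i1 i2 i3 i4 vv by (simp add: BB_def C_def)
  have B: "(a 0, c 1, b 1) \<in> Bset k l (A 0) (C 1)"
    unfolding Bset_def A_def C_def
    using a0 c1 h1[rule_format, of 0] h2[rule_format, of 0] h3[rule_format, of 1] h4[rule_format, of 1]
    by simp
  show ?thesis using s T B by simp
qed

lemma glue_splt: "(a,b,c) \<in> ehf_monomials k l N \<Longrightarrow> glue (splt (a,b,c)) = (a,b,c)"
  unfolding glue_def splt_def ehf_monomials_def is_ehf_monomial_def
  by (auto simp: fun_eq_iff)

lemma splt_glue: "(a,b,c) \<in> Tset k N \<Longrightarrow> splt (glue ((a,b,c),(x,y,\<beta>))) = ((a,b,c),(x,y,\<beta>))"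
  unfolding glue_def splt_def Tset_def
  by (auto simp: fun_eq_iff)


lemma step:
  assumes N: "N \<ge> 1"
  shows "card (ehf_monomials k l (Suc N)) = (\<Sum>t\<in>Tset k N. card (Bset k l (fst t 0) (snd (snd t) 1)))"
proof -
  let ?S = "SIGMA t:Tset k N. Bset k l (fst t 0) (snd (snd t) 1)"
  have "bij_betw glue ?S (ehf_monomials k l (Suc N))"
  proof (rule bij_betw_byWitness[where f'=splt])
    show "\<forall>p\<in>?S. splt (glue p) = p"
    proof
      fix p assume "p \<in> ?S"
      then obtain t r where p: "p = (t,r)" and t: "t \<in> Tset k N" by blast
      obtain a b c where abc: "t = (a,b,c)" by (cases t)
      obtain x y \<beta> where r: "r = (x,y,\<beta>)" by (cases r)
      show "splt (glue p) = p" unfolding p abc r using splt_glue t abc by blast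
    qed
    show "\<forall>q\<in>ehf_monomials k l (Suc N). glue (splt q) = q"
    proof
      fix q assume q: "q \<in> ehf_monomials k l (Suc N)"
      obtain a b c where abc: "q = (a,b,c)" by (cases q)
      show "glue (splt q) = q" unfolding abc using glue_splt q abc by blast
    qed
    show "glue ` ?S \<subseteq> ehf_monomials k l (Suc N)"
    proof (rule image_subsetI)
      fix p assume "p \<in> ?S"
      then obtain t r where p: "p = (t,r)" and t: "t \<in> Tset k N"
        and r: "r \<in> Bset k l (fst t 0) (snd (snd t) 1)" by blast
      obtain a b c where abc: "t = (a,b,c)" by (cases t)
      obtain x y \<beta> where xyb: "r = (x,y,\<beta>)" by (cases r)
      have "(a,b,c) \<in> Tset k N" using t abc by simp
      moreover have "(x,y,\<beta>) \<in> Bset k l (a 0) (c 1)" using r abc xyb by simp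
      ultimately show "glue p \<in> ehf_monomials k l (Suc N)" unfolding p abc xyb by (rule glue_in[OF N])
    qed
    show "splt ` ehf_monomials k l (Suc N) \<subseteq> ?S"
    proof (rule image_subsetI)
      fix q assume q: "q \<in> ehf_monomials k l (Suc N)"
      obtain a b c where abc: "q = (a,b,c)" by (cases q)
      show "splt q \<in> ?S" unfolding abc by (rule splt_in) (use q abc in simp)
    qed
  qed
  then have "card ?S = card (ehf_monomials k l (Suc N))" by (rule bij_betw_same_card)
  moreover have "card ?S = (\<Sum>t\<in>Tset k N. card (Bset k l (fst t 0) (snd (snd t) 1)))"
    using finite_Tset finite_Bset by (simp add: card_SigmaI)
  ultimately show ?thesis by simp
qed

lemma p_rec:
  assumes N: "N \<ge> 1" and l: "l \<le> k"
  shows "p_count k l (Suc N) = (\<Sum>m\<le>k. p_count k m N * Mn k l m)"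
proof -
  have "p_count k l (Suc N) = (\<Sum>t\<in>Tset k N. card (Bset k l (fst t 0) (snd (snd t) 1)))"
    unfolding p_count_def by (rule step[OF N])
  also have "\<dots> = (\<Sum>t\<in>Tset k N. \<Sum>m\<le>k. of_bool (fst t 0 \<le> m \<and> snd (snd t) 1 + m \<le> k) * Mn k l m)"
    using key_count[OF l] by simp
  also have "\<dots> = (\<Sum>m\<le>k. \<Sum>t\<in>Tset k N. of_bool (fst t 0 \<le> m \<and> snd (snd t) 1 + m \<le> k) * Mn k l m)"
    by (rule sum.swap)
  also have "\<dots> = (\<Sum>m\<le>k. (\<Sum>t\<in>Tset k N. of_bool (fst t 0 \<le> m \<and> snd (snd t) 1 + m \<le> k)) * Mn k l m)"
    by (simp only: sum_distrib_right)
  also have "\<dots> = (\<Sum>m\<le>k. p_count k m N * Mn k l m)"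
  proof (intro sum.cong refl)
    fix m assume "m \<in> {..k}"
    then have m: "m \<le> k" by simp
    have "(\<Sum>t\<in>Tset k N. (of_bool (fst t 0 \<le> m \<and> snd (snd t) 1 + m \<le> k)::nat))
       = card (Tset k N \<inter> {t. fst t 0 \<le> m \<and> snd (snd t) 1 + m \<le> k})"
      using finite_Tset by simp
    also have "Tset k N \<inter> {t. fst t 0 \<le> m \<and> snd (snd t) 1 + m \<le> k} = ehf_monomials k m N"
      unfolding ehf_eq using m by auto
    finally show "(\<Sum>t\<in>Tset k N. of_bool (fst t 0 \<le> m \<and> snd (snd t) 1 + m \<le> k)) * Mn k l m
        = p_count k m N * Mn k l m" unfolding p_count_def by simp
  qed
  finally show ?thesis .
qed

lemma p_one:
  assumes l: "l \<le> k"
  shows "p_count k l 1 = l + 1"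
proof -
  let ?f = "\<lambda>x::nat. ((\<lambda>i::nat. if i=0 then x else 0), (\<lambda>i::nat. 0::nat), (\<lambda>i::nat. 0::nat))"
  have "bij_betw ?f {..l} (ehf_monomials k l 1)"
  proof (rule bij_betw_byWitness[where f'="\<lambda>t. fst t 0"])
    show "\<forall>x\<in>{..l}. fst (?f x) 0 = x" by simp
    show "\<forall>t\<in>ehf_monomials k l 1. ?f (fst t 0) = t"
      apply (auto simp: ehf_monomials_def is_ehf_monomial_def fun_eq_iff)
       apply (case_tac x; simp)+
      done
    show "?f ` {..l} \<subseteq> ehf_monomials k l 1"
      using l by (auto simp: ehf_monomials_def is_ehf_monomial_def)
    show "(\<lambda>t. fst t 0) ` ehf_monomials k l 1 \<subseteq> {..l}"
      by (auto simp: ehf_monomials_def is_ehf_monomial_def)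
  qed
  then show ?thesis unfolding p_count_def by (simp add: bij_betw_same_card[symmetric])
qed


lemma X_val: "l2 \<le> k \<Longrightarrow> verlinde_X k l2 = int l2 + 1"
  by (simp add: verlinde_X_def)

lemma d_one:
  assumes l: "l \<le> k"
  shows "d_coeff 1 k l = int l + 1"
proof -
  have "d_coeff 1 k l = (\<Sum>l1\<le>k. \<Sum>l2\<le>k. verlinde_basis k 0 l1 * verlinde_X k l2 * verlinde_coeff k l1 l2 l)"
    using l by (simp add: d_coeff_def verlinde_mult_def)
  also have "\<dots> = (\<Sum>l2\<le>k. verlinde_X k l2 * verlinde_coeff k 0 l2 l)"
  proof -
    have "{..k} = insert 0 {1..k}" by auto
    moreover have "(\<Sum>l1\<in>{1..k}. \<Sum>l2\<le>k. verlinde_basis k 0 l1 * verlinde_X k l2 * verlinde_coeff k l1 l2 l) = 0"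
      by (intro sum.neutral ballI) (auto simp: verlinde_basis_def)
    ultimately show ?thesis by (simp add: verlinde_basis_def)
  qed
  also have "\<dots> = (\<Sum>l2\<le>k. (int l2 + 1) * verlinde_coeff k 0 l2 l)"
    by (intro sum.cong refl) (simp add: X_val)
  also have "\<dots> = int (Mn k l 0)" by (rule M_sum[OF l]) simp
  also have "\<dots> = int l + 1" using l by (simp add: Mn_def)
  finally show ?thesis .
qed

lemma main_ind: "l \<le> k \<Longrightarrow> int (p_count k l (Suc n)) = d_coeff (Suc n) k l"
proof (induction n arbitrary: l)
  case 0
  then show ?case using p_one d_one by simp
next
  case (Suc n)
  have "d_coeff (Suc (Suc n)) k l
      = (\<Sum>l1\<le>k. \<Sum>l2\<le>k. d_coeff (Suc n) k l1 * verlinde_X k l2 * verlinde_coeff k l1 l2 l)"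
    using Suc.prems by (simp add: d_coeff_def verlinde_mult_def)
  also have "\<dots> = (\<Sum>l1\<le>k. int (p_count k l1 (Suc n)) * (\<Sum>l2\<le>k. (int l2 + 1) * verlinde_coeff k l1 l2 l))"
  proof (intro sum.cong refl)
    fix l1 assume "l1 \<in> {..k}"
    then have l1: "l1 \<le> k" by simp
    have "(\<Sum>l2\<le>k. d_coeff (Suc n) k l1 * verlinde_X k l2 * verlinde_coeff k l1 l2 l)
        = (\<Sum>l2\<le>k. int (p_count k l1 (Suc n)) * ((int l2 + 1) * verlinde_coeff k l1 l2 l))"
      by (intro sum.cong refl) (simp add: X_val Suc.IH[OF l1] mult.assoc)
    also have "\<dots> = int (p_count k l1 (Suc n)) * (\<Sum>l2\<le>k. (int l2 + 1) * verlinde_coeff k l1 l2 l)"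
      by (simp only: sum_distrib_left)
    finally show "(\<Sum>l2\<le>k. d_coeff (Suc n) k l1 * verlinde_X k l2 * verlinde_coeff k l1 l2 l)
        = int (p_count k l1 (Suc n)) * (\<Sum>l2\<le>k. (int l2 + 1) * verlinde_coeff k l1 l2 l)" .
  qed
  also have "\<dots> = (\<Sum>l1\<le>k. int (p_count k l1 (Suc n)) * int (Mn k l l1))"
    by (intro sum.cong refl) (simp add: M_sum Suc.prems)
  also have "\<dots> = int (\<Sum>l1\<le>k. p_count k l1 (Suc n) * Mn k l l1)"
    by simp
  also have "\<dots> = int (p_count k l (Suc (Suc n)))"
    using p_rec[of "Suc n" l k] Suc.prems by simp
  finally show ?case by simp
qed

theorem proposition3p2p3:
  fixes k l N :: nat
  assumes "k > 0" and "l \<le> k" and "N \<ge> 1"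
  shows "int (p_count k l N) = d_coeff N k l"
proof -
  obtain n where "N = Suc n" using assms(3) by (cases N) auto
  then show ?thesis using main_ind[OF assms(2)] by simp
qed

end
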